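(* Let $G$ be a splittable query graph and $C_1,C_2\in\mathrm{Eq}$ with $C_1\ne C_2$. Then (1) either $C_1\notin coupled^+(C_2)$ or $C_2\notin coupled^+(C_1)$; and (2) if $C_1\in coupled^+(C_2)$, then $coupled^+(C_1)\subsetneq coupled^+(C_2)$.
   Context: $G=G[Q]$ is the query graph of a Boolean CQ without self-joins with atoms $R(u,v)$, $u\ne v$, first attribute the key: vertices are variables, each atom gives an edge $e_R=(u_R,v_R)$, consistent/inconsistent according to the type of $R$; $E^i$ = inconsistent edges. Paths may have zero edges; $x\leadsto y$ denotes a directed path, undirected paths ignore directions; for a path $P$ and vertex set $N$, $P\cap N$ is the set of vertices of $P$ (endpoints included) in $N$. $u^+=\{v:u\leadsto v\}$, $u^{+,R}=\{v: u\leadsto v$ in $G-\{e_R\}\}$. For $R,S\in E^i$: $R\sim S$ iff $u_S\in u_R^+$ and $u_R\in u_S^+$; $[R]$ the class of $R$; $coupled^+(R)=[R]\cup\{S\in E^i:\exists$ undirected path $P$ from $v_R$ to $u_S$ with $P\cap u_R^{+,R}=\emptyset\}$; $G$ is splittable if there are no $R,S\in E^i$ with $R\in coupled^+(S)$, $S\in coupled^+(R)$ and $R\not\sim S$. $\mathrm{Eq}$ is the set of $\sim$-classes of $E^i$. For $C\in\mathrm{Eq}$, $C^+=\bigcap_{R\in C}u_R^{+,R}$ and $coupled^+(C)=\{C\}\cup\{C'\in\mathrm{Eq}:\exists R\in C,S\in C'$ and an undirected path $P$ from $v_R$ to $u_S$ with $P\cap C^+=\emptyset\}$. *)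

theory Defs
  imports Main
begin

text \<open>A query graph of a Boolean CQ without self-joins with binary atoms R(u,v):
  atoms are given by a set At of relation names; atom R yields the directed edge
  (u R, v R); Inc \<subseteq> At is the set of inconsistent atoms (edges E^i).\<close>

definition query_graph :: "'r set \<Rightarrow> ('r \<Rightarrow> 'v) \<Rightarrow> ('r \<Rightarrow> 'v) \<Rightarrow> 'r set \<Rightarrow> bool" where
  "query_graph At u v Inc \<longleftrightarrow> finite At \<and> Inc \<subseteq> At \<and> (\<forall>R\<in>At. u R \<noteq> v R)"

definition dedges :: "'r set \<Rightarrow> ('r \<Rightarrow> 'v) \<Rightarrow> ('r \<Rightarrow> 'v) \<Rightarrow> ('v \<times> 'v) set" where
  "dedges At u v = {(u S, v S) | S. S \<in> At}"

definition reach :: "'r set \<Rightarrow> ('r \<Rightarrow> 'v) \<Rightarrow> ('r \<Rightarrow> 'v) \<Rightarrow> 'v \<Rightarrow> 'v set" where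
  "reach At u v x = {y. (x, y) \<in> (dedges At u v)\<^sup>*}"

text \<open>u_R^{+,R}: reachable from u_R in G - {e_R}.\<close>
definition reachR :: "'r set \<Rightarrow> ('r \<Rightarrow> 'v) \<Rightarrow> ('r \<Rightarrow> 'v) \<Rightarrow> 'r \<Rightarrow> 'v set" where
  "reachR At u v R = reach (At - {R}) u v (u R)"

definition upath :: "'r set \<Rightarrow> ('r \<Rightarrow> 'v) \<Rightarrow> ('r \<Rightarrow> 'v) \<Rightarrow> 'v list \<Rightarrow> 'v \<Rightarrow> 'v \<Rightarrow> bool" where
  "upath At u v P x y \<longleftrightarrow> P \<noteq> [] \<and> hd P = x \<and> last P = y \<and>
     (\<forall>i. Suc i < length P \<longrightarrow> (\<exists>S\<in>At. {P ! i, P ! Suc i} = {u S, v S}))"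

definition sim :: "'r set \<Rightarrow> ('r \<Rightarrow> 'v) \<Rightarrow> ('r \<Rightarrow> 'v) \<Rightarrow> 'r \<Rightarrow> 'r \<Rightarrow> bool" where
  "sim At u v R S \<longleftrightarrow> u S \<in> reach At u v (u R) \<and> u R \<in> reach At u v (u S)"

definition eqclass :: "'r set \<Rightarrow> ('r \<Rightarrow> 'v) \<Rightarrow> ('r \<Rightarrow> 'v) \<Rightarrow> 'r set \<Rightarrow> 'r \<Rightarrow> 'r set" where
  "eqclass At u v Inc R = {S \<in> Inc. sim At u v R S}"

definition coupled :: "'r set \<Rightarrow> ('r \<Rightarrow> 'v) \<Rightarrow> ('r \<Rightarrow> 'v) \<Rightarrow> 'r set \<Rightarrow> 'r \<Rightarrow> 'r set" where
  "coupled At u v Inc R = eqclass At u v Inc R \<union>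
     {S \<in> Inc. \<exists>P. upath At u v P (v R) (u S) \<and> set P \<inter> reachR At u v R = {}}"

definition splittable :: "'r set \<Rightarrow> ('r \<Rightarrow> 'v) \<Rightarrow> ('r \<Rightarrow> 'v) \<Rightarrow> 'r set \<Rightarrow> bool" where
  "splittable At u v Inc \<longleftrightarrow> \<not> (\<exists>R\<in>Inc. \<exists>S\<in>Inc. R \<in> coupled At u v Inc S \<and>
      S \<in> coupled At u v Inc R \<and> \<not> sim At u v R S)"

definition Eqs :: "'r set \<Rightarrow> ('r \<Rightarrow> 'v) \<Rightarrow> ('r \<Rightarrow> 'v) \<Rightarrow> 'r set \<Rightarrow> 'r set set" where
  "Eqs At u v Inc = eqclass At u v Inc ` Inc"

definition Cplus :: "'r set \<Rightarrow> ('r \<Rightarrow> 'v) \<Rightarrow> ('r \<Rightarrow> 'v) \<Rightarrow> 'r set \<Rightarrow> 'v set" where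
  "Cplus At u v C = (\<Inter>R\<in>C. reachR At u v R)"

definition coupledC :: "'r set \<Rightarrow> ('r \<Rightarrow> 'v) \<Rightarrow> ('r \<Rightarrow> 'v) \<Rightarrow> 'r set \<Rightarrow> 'r set \<Rightarrow> 'r set set" where
  "coupledC At u v Inc C = {C} \<union> {C' \<in> Eqs At u v Inc. \<exists>R\<in>C. \<exists>S\<in>C'. \<exists>P.
      upath At u v P (v R) (u S) \<and> set P \<inter> Cplus At u v C = {}}"

end

theory Submission
  imports Defs
begin

definition adj :: "'r set \<Rightarrow> ('r\<Rightarrow>'v) \<Rightarrow> ('r\<Rightarrow>'v) \<Rightarrow> 'v set \<Rightarrow> ('v\<times>'v) set" where
  "adj At u v N = {(a,b). a \<notin> N \<and> b \<notin> N \<and> (\<exists>S\<in>At. {a,b} = {u S, v S})}"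

definition conn :: "'r set \<Rightarrow> ('r\<Rightarrow>'v) \<Rightarrow> ('r\<Rightarrow>'v) \<Rightarrow> 'v set \<Rightarrow> 'v \<Rightarrow> 'v \<Rightarrow> bool" where
  "conn At u v N x y \<longleftrightarrow> x \<notin> N \<and> (x,y) \<in> (adj At u v N)\<^sup>*"

lemma adj_rt_sym: "(x,y) \<in> (adj At u v N)\<^sup>* \<Longrightarrow> (y,x) \<in> (adj At u v N)\<^sup>*"
proof (induction rule: rtrancl_induct)
  case base then show ?case by simp
next
  case (step y z)
  then have "(z,y) \<in> adj At u v N" unfolding adj_def by (auto simp: insert_commute)
  then show ?case using step(3) by (meson converse_rtrancl_into_rtrancl)
qed

lemma adj_rt_end: "(x,y) \<in> (adj At u v N)\<^sup>* \<Longrightarrow> x \<notin> N \<Longrightarrow> y \<notin> N"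
  by (induction rule: rtrancl_induct) (auto simp: adj_def)

lemma conn_end: "conn At u v N x y \<Longrightarrow> x \<notin> N \<and> y \<notin> N"
  using adj_rt_end conn_def by metis

lemma conn_sym: "conn At u v N x y \<Longrightarrow> conn At u v N y x"
  using conn_end adj_rt_sym conn_def by metis

lemma conn_trans: "conn At u v N x y \<Longrightarrow> conn At u v N y z \<Longrightarrow> conn At u v N x z"
  unfolding conn_def by auto

lemma conn_refl: "x \<notin> N \<Longrightarrow> conn At u v N x x"
  unfolding conn_def by auto

lemma conn_step: "conn At u v N x y \<Longrightarrow> (y,z) \<in> adj At u v N \<Longrightarrow> conn At u v N x z"
  unfolding conn_def by auto

lemma adj_mono: "N' \<subseteq> N \<Longrightarrow> adj At u v N \<subseteq> adj At u v N'"
  unfolding adj_def by auto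

lemma conn_mono: "N' \<subseteq> N \<Longrightarrow> conn At u v N x y \<Longrightarrow> conn At u v N' x y"
  unfolding conn_def using rtrancl_mono[OF adj_mono] by blast

lemma conn_edge: "S \<in> At \<Longrightarrow> u S \<notin> N \<Longrightarrow> v S \<notin> N \<Longrightarrow> conn At u v N (u S) (v S)"
  unfolding conn_def adj_def by blast

lemma conn_of_F:
  assumes "(x,y) \<in> F\<^sup>*" "F \<subseteq> dedges At u v"
    and "\<forall>z. (x,z) \<in> F\<^sup>* \<longrightarrow> (z,y) \<in> F\<^sup>* \<longrightarrow> z \<notin> N"
  shows "conn At u v N x y"
  using assms
proof (induction arbitrary: rule: rtrancl_induct)
  case base then show ?case by (auto intro: conn_refl)
next
  case (step y z)
  have h: "\<forall>w. (x,w) \<in> F\<^sup>* \<longrightarrow> (w,y) \<in> F\<^sup>* \<longrightarrow> w \<notin> N"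
    using step by (meson rtrancl.rtrancl_into_rtrancl)
  have c: "conn At u v N x y" using step.IH[OF step.prems(1) h] .
  have "y \<notin> N" using h step(1) by blast
  moreover have "z \<notin> N" using step.prems(2) rtrancl.rtrancl_into_rtrancl[OF step(1,2)] by blast
  moreover obtain S where "S \<in> At" "(y,z) = (u S, v S)" using step(2) step.prems(1) unfolding dedges_def by blast
  ultimately have "(y,z) \<in> adj At u v N" unfolding adj_def by auto
  then show ?case using c conn_step by metis
qed

lemma upath_tl: "upath At u v (a # b # P) x y \<Longrightarrow> upath At u v (b # P) b y \<and> a = x \<and> (\<exists>S\<in>At. {a,b} = {u S, v S})"
  unfolding upath_def
  apply (intro conjI)
      apply simp
     apply simp
    apply simp
   apply (intro allI impI)
  subgoal for i by (elim conjE, drule spec[of _ "Suc i"]) simp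
   apply simp
  apply (elim conjE, drule spec[of _ 0]) by simp

lemma upath_conn: "upath At u v P x y \<Longrightarrow> set P \<inter> N = {} \<Longrightarrow> conn At u v N x y"
proof (induction P arbitrary: x)
  case Nil then show ?case by (simp add: upath_def)
next
  case (Cons a P)
  show ?case
  proof (cases P)
    case Nil then show ?thesis using Cons.prems by (auto simp: upath_def intro: conn_refl)
  next
    case (Cons b P')
    have u: "upath At u v (b # P') b y" "a = x" "\<exists>S\<in>At. {a,b} = {u S, v S}"
      using upath_tl Cons Cons.prems(1) by metis+
    have "conn At u v N b y" using Cons.IH u(1) Cons.prems(2) Cons by auto
    moreover have "(a,b) \<in> adj At u v N" using u(3) Cons.prems(2) Cons unfolding adj_def by auto
    ultimately show ?thesis using u(2) Cons.prems(2) unfolding conn_def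
      by (auto intro: converse_rtrancl_into_rtrancl)
  qed
qed

lemma conn_upath: "conn At u v N x y \<Longrightarrow> \<exists>P. upath At u v P x y \<and> set P \<inter> N = {}"
  unfolding conn_def
proof (elim conjE)
  assume x: "x \<notin> N" and r: "(x,y) \<in> (adj At u v N)\<^sup>*"
  from r show "\<exists>P. upath At u v P x y \<and> set P \<inter> N = {}"
  proof (induction rule: rtrancl_induct)
    case base then show ?case using x by (intro exI[of _ "[x]"]) (simp add: upath_def)
  next
    case (step y z)
    then obtain P where P: "upath At u v P x y" "set P \<inter> N = {}" by blast
    have z: "z \<notin> N" and e: "\<exists>S\<in>At. {y,z} = {u S, v S}" using step(2) unfolding adj_def by auto
    have "upath At u v (P @ [z]) x z"
      unfolding upath_def
    proof (intro conjI allI impI)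
      show "P @ [z] \<noteq> []" by simp
      show "hd (P @ [z]) = x" using P(1) unfolding upath_def by simp
      show "last (P @ [z]) = z" by simp
      fix i assume i: "Suc i < length (P @ [z])"
      show "\<exists>S\<in>At. {(P @ [z]) ! i, (P @ [z]) ! Suc i} = {u S, v S}"
      proof (cases "Suc i < length P")
        case True then show ?thesis using P(1) unfolding upath_def by (simp add: nth_append)
      next
        case False
        then have "i = length P - 1" "P \<noteq> []" using i P(1) unfolding upath_def by auto
        then have "(P @ [z]) ! i = y" "(P @ [z]) ! Suc i = z" using P(1) unfolding upath_def
          by (auto simp: nth_append last_conv_nth)
        then show ?thesis using e by simp
      qed
    qed
    moreover have "set (P @ [z]) \<inter> N = {}" using P(2) z by auto
    ultimately show ?case by blast
  qed
qed

lemma conn_iff: "conn At u v N x y \<longleftrightarrow> (\<exists>P. upath At u v P x y \<and> set P \<inter> N = {})"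
  using conn_upath upath_conn by metis

lemma dedges_sub: "A \<subseteq> insert R B \<Longrightarrow> dedges A u v \<subseteq> insert (u R, v R) (dedges B u v)"
  unfolding dedges_def by blast

lemma dedges_rm: "dedges A u v \<subseteq> insert (u R, v R) (dedges (A - {R}) u v)"
  by (rule dedges_sub) auto

lemma dedges_rm2: "dedges (A - {R0}) u v \<subseteq> insert (u R1, v R1) (dedges (A - {R1}) u v)"
  by (rule dedges_sub) auto

lemma dedges_mono: "A \<subseteq> B \<Longrightarrow> dedges A u v \<subseteq> dedges B u v"
  unfolding dedges_def by blast

lemma L1: "(x,y) \<in> F\<^sup>* \<Longrightarrow> F \<subseteq> insert (p,q) F' \<Longrightarrow> (x,y) \<in> F'\<^sup>* \<or> (q,y) \<in> F'\<^sup>*"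
proof (induction rule: rtrancl_induct)
  case base then show ?case by simp
next
  case (step y z)
  show ?case
  proof (cases "(y,z) \<in> F'")
    case True then show ?thesis using step(3)[OF step(4)] rtrancl.rtrancl_into_rtrancl[of x y F' z]
        rtrancl.rtrancl_into_rtrancl[of q y F' z] by blast
  next
    case False then have "z = q" using step(2,4) by auto
    then show ?thesis by simp
  qed
qed

lemma L2: "(x,y) \<in> F\<^sup>* \<Longrightarrow> F \<subseteq> insert (p,q) F' \<Longrightarrow> (x,y) \<in> F'\<^sup>* \<or> (x,p) \<in> F\<^sup>*"
proof (induction rule: rtrancl_induct)
  case base then show ?case by simp
next
  case (step y z)
  show ?case
  proof (cases "(y,z) \<in> F'")
    case True then show ?thesis using step(3)[OF step(4)] rtrancl.rtrancl_into_rtrancl[of x y F' z] by blast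
  next
    case False then have "y = p" using step(2,4) by auto
    then show ?thesis using step(1) by simp
  qed
qed

lemma reachR_iff: "y \<in> reachR At u v R \<longleftrightarrow> (u R, y) \<in> (dedges (At - {R}) u v)\<^sup>*"
  by (simp add: reachR_def reach_def)

lemma reach_iff: "y \<in> reach At u v x \<longleftrightarrow> (x, y) \<in> (dedges At u v)\<^sup>*"
  by (simp add: reach_def)

lemma rR_sub: "(a,b) \<in> (dedges (At - {R}) u v)\<^sup>* \<Longrightarrow> (a,b) \<in> (dedges At u v)\<^sup>*"
  using rtrancl_mono[OF dedges_mono[of "At - {R}" At]] by blast

lemma sim_refl: "sim At u v R R" by (simp add: sim_def reach_def)
lemma sim_sym: "sim At u v R S \<Longrightarrow> sim At u v S R" by (simp add: sim_def)
lemma sim_trans: "sim At u v R S \<Longrightarrow> sim At u v S T \<Longrightarrow> sim At u v R T"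
  unfolding sim_def reach_def by (auto intro: rtrancl_trans)

lemma in_Eqs: "C \<in> Eqs At u v Inc \<Longrightarrow> S \<in> C \<Longrightarrow> C = eqclass At u v Inc S \<and> S \<in> Inc"
proof -
  assume a: "C \<in> Eqs At u v Inc" "S \<in> C"
  then obtain R where R: "R \<in> Inc" "C = eqclass At u v Inc R" unfolding Eqs_def by blast
  then have s: "sim At u v R S" "S \<in> Inc" using a(2) unfolding eqclass_def by auto
  have "eqclass At u v Inc R = eqclass At u v Inc S"
    unfolding eqclass_def using s(1) sim_sym[OF s(1)] sim_trans[of At u v R S] sim_trans[of At u v S R] by auto
  then show ?thesis using R s by simp
qed

lemma class_sim: "C \<in> Eqs At u v Inc \<Longrightarrow> S \<in> C \<Longrightarrow> S' \<in> C \<Longrightarrow> sim At u v S S'"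
proof -
  assume a: "C \<in> Eqs At u v Inc" "S \<in> C" "S' \<in> C"
  have "C = eqclass At u v Inc S" using in_Eqs a by metis
  then show ?thesis using a(3) unfolding eqclass_def by auto
qed

lemma class_nsim: "C \<in> Eqs At u v Inc \<Longrightarrow> C' \<in> Eqs At u v Inc \<Longrightarrow> C \<noteq> C' \<Longrightarrow> S \<in> C \<Longrightarrow> S' \<in> C'
   \<Longrightarrow> \<not> sim At u v S S'"
proof
  assume a: "C \<in> Eqs At u v Inc" "C' \<in> Eqs At u v Inc" "C \<noteq> C'" "S \<in> C" "S' \<in> C'" "sim At u v S S'"
  have "C = eqclass At u v Inc S" "C' = eqclass At u v Inc S'" using in_Eqs a by metis+
  moreover have "eqclass At u v Inc S = eqclass At u v Inc S'"
    unfolding eqclass_def using a(6) sim_sym[OF a(6)] sim_trans[of At u v S S'] sim_trans[of At u v S' S] by auto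
  ultimately show False using a(3) by simp
qed

lemma direct:
  assumes C: "C \<in> Eqs At u v Inc" and R1: "R1 \<in> C" and z: "z \<in> reachR At u v R1" "z \<notin> Cplus At u v C"
  shows "\<exists>R2\<in>C. conn At u v (reachR At u v R2) (v R2) z"
proof -
  obtain R2 where R2: "R2 \<in> C" "z \<notin> reachR At u v R2" using z(2) unfolding Cplus_def by blast
  have "sim At u v R2 R1" using class_sim[OF C R2(1) R1] .
  then have "(u R2, u R1) \<in> (dedges At u v)\<^sup>*" unfolding sim_def reach_def by simp
  moreover have "(u R1, z) \<in> (dedges At u v)\<^sup>*" using z(1) rR_sub[of "u R1" z At R1 u v] unfolding reachR_iff by simp
  ultimately have t: "(u R2, z) \<in> (dedges At u v)\<^sup>*" by (rule rtrancl_trans)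
  have d: "(u R2, z) \<in> (dedges (At - {R2}) u v)\<^sup>* \<or> (v R2, z) \<in> (dedges (At - {R2}) u v)\<^sup>*"
    using L1[OF t dedges_rm[of At u v R2]] .
  have "(u R2, z) \<notin> (dedges (At - {R2}) u v)\<^sup>*" using R2(2) unfolding reachR_iff .
  then have "(v R2, z) \<in> (dedges (At - {R2}) u v)\<^sup>*" using d by simp
  then have "conn At u v (reachR At u v R2) (v R2) z"
  proof (rule conn_of_F)
    show "dedges (At - {R2}) u v \<subseteq> dedges At u v" by (rule dedges_mono) auto
    show "\<forall>w. (v R2, w) \<in> (dedges (At - {R2}) u v)\<^sup>* \<longrightarrow> (w, z) \<in> (dedges (At - {R2}) u v)\<^sup>* \<longrightarrow> w \<notin> reachR At u v R2"
      using R2(2) unfolding reachR_iff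
      proof (intro allI impI notI)
        fix w assume "(u R2, z) \<notin> (dedges (At - {R2}) u v)\<^sup>*" "(w, z) \<in> (dedges (At - {R2}) u v)\<^sup>*"
          "(u R2, w) \<in> (dedges (At - {R2}) u v)\<^sup>*"
        then show False using rtrancl_trans[of "u R2" w _ z] by blast
      qed
  qed
  then show ?thesis using R2 by blast
qed

lemma lemmaA:
  assumes C: "C \<in> Eqs At u v Inc" and R: "R \<in> C" and c: "conn At u v (Cplus At u v C) (v R) y"
  shows "\<exists>R0\<in>C. conn At u v (reachR At u v R0) (v R0) y"
proof -
  have x: "v R \<notin> Cplus At u v C" and r: "(v R, y) \<in> (adj At u v (Cplus At u v C))\<^sup>*"
    using c unfolding conn_def by auto
  from r show ?thesis
  proof (induction rule: rtrancl_induct)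
    case base
    show ?case
    proof (cases "\<exists>R1\<in>C. v R \<in> reachR At u v R1")
      case True then obtain R1 where R1: "R1 \<in> C" "v R \<in> reachR At u v R1" by blast
      show ?thesis using direct[OF C R1 x] .
    next
      case False then have "v R \<notin> reachR At u v R" using R by blast
      then have "conn At u v (reachR At u v R) (v R) (v R)" by (rule conn_refl)
      then show ?thesis using R by blast
    qed
  next
    case (step y z)
    have zc: "z \<notin> Cplus At u v C" and yz: "\<exists>S\<in>At. {y,z} = {u S, v S}" using step(2) unfolding adj_def by simp_all
    show ?case
    proof (cases "\<exists>R1\<in>C. z \<in> reachR At u v R1")
      case True then obtain R1 where R1: "R1 \<in> C" "z \<in> reachR At u v R1" by blast
      show ?thesis using direct[OF C R1 zc] .
    next
      case False
      obtain R0 where R0: "R0 \<in> C" "conn At u v (reachR At u v R0) (v R0) y" using step.IH by blast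
      have "y \<notin> reachR At u v R0" using conn_end[OF R0(2)] by blast
      moreover have "z \<notin> reachR At u v R0" using False R0(1) by blast
      ultimately have "(y,z) \<in> adj At u v (reachR At u v R0)" using yz unfolding adj_def by auto
      then have "conn At u v (reachR At u v R0) (v R0) z" by (rule conn_step[OF R0(2)])
      then show ?thesis using R0(1) by blast
    qed
  qed
qed

lemma TC:
  assumes c: "conn At u v (reachR At u v R0) (v R0) (u S)" and s: "sim At u v S S'"
    and ns: "\<not> sim At u v R0 S"
  shows "conn At u v (reachR At u v R0) (v R0) (u S')"
proof -
  let ?E = "dedges At u v"
  let ?Ez = "dedges (At - {R0}) u v"
  have uS: "u S \<notin> reachR At u v R0" using conn_end[OF c] by blast
  have ss: "(u S, u S') \<in> (?E)\<^sup>*" "(u S', u S) \<in> (?E)\<^sup>*" using s unfolding sim_def reach_def by auto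
  have "conn At u v (reachR At u v R0) (u S) (u S')"
    using ss(1)
  proof (rule conn_of_F)
    show "?E \<subseteq> ?E" by simp
    show "\<forall>z. (u S, z) \<in> (?E)\<^sup>* \<longrightarrow> (z, u S') \<in> (?E)\<^sup>* \<longrightarrow> z \<notin> reachR At u v R0"
    proof (intro allI impI notI)
      fix z assume z: "(u S, z) \<in> (?E)\<^sup>*" "(z, u S') \<in> (?E)\<^sup>*" "z \<in> reachR At u v R0"
      have z0: "(u R0, z) \<in> (?Ez)\<^sup>*" using z(3) unfolding reachR_iff .
      have "(z, u S) \<in> (?E)\<^sup>*" using rtrancl_trans[OF z(2) ss(2)] .
      from L2[OF this dedges_rm[of At u v R0]]
      show False
      proof
        assume "(z, u S) \<in> (?Ez)\<^sup>*"
        then have "u S \<in> reachR At u v R0" using rtrancl_trans[OF z0] unfolding reachR_iff by blast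
        then show False using uS by simp
      next
        assume "(z, u R0) \<in> (?E)\<^sup>*"
        then have "(u S, u R0) \<in> (?E)\<^sup>*" using rtrancl_trans[OF z(1)] by blast
        moreover have "(u R0, u S) \<in> (?E)\<^sup>*" using rtrancl_trans[OF rR_sub[OF z0] \<open>(z, u S) \<in> (?E)\<^sup>*\<close>] .
        ultimately show False using ns unfolding sim_def reach_def by simp
      qed
    qed
  qed
  then show ?thesis using conn_trans[OF c] by blast
qed

lemma in_coupled: "S \<in> Inc \<Longrightarrow> conn At u v (reachR At u v R) (v R) (u S) \<Longrightarrow> S \<in> coupled At u v Inc R"
proof -
  assume a: "S \<in> Inc" "conn At u v (reachR At u v R) (v R) (u S)"
  obtain P where "upath At u v P (v R) (u S)" "set P \<inter> reachR At u v R = {}" using conn_upath[OF a(2)] by blast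
  then show ?thesis unfolding coupled_def using a(1) by blast
qed

lemma restrict: "(x,y) \<in> (adj At u v A)\<^sup>* \<Longrightarrow> (\<forall>z. (x,z) \<in> (adj At u v A)\<^sup>* \<longrightarrow> z \<notin> B) \<Longrightarrow> (x,y) \<in> (adj At u v B)\<^sup>*"
proof (induction rule: rtrancl_induct)
  case base then show ?case by simp
next
  case (step y z)
  then have "y \<notin> B" "z \<notin> B" using rtrancl.rtrancl_into_rtrancl[OF step(1,2)] by blast+
  then have "(y,z) \<in> adj At u v B" using step(2) unfolding adj_def by auto
  then show ?case using step(3)[OF step(4)] by (simp add: rtrancl.rtrancl_into_rtrancl)
qed

lemma P2core:
  assumes sp: "splittable At u v Inc" and I: "R0 \<in> Inc" "R1 \<in> Inc" and ns: "\<not> sim At u v R0 R1"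
    and c0: "conn At u v (reachR At u v R0) (v R0) (u R1)"
    and c1: "conn At u v (reachR At u v R1) (v R1) y"
  shows "conn At u v (reachR At u v R0) (v R1) y"
proof -
  let ?Nz = "reachR At u v R0"
  let ?No = "reachR At u v R1"
  let ?Ez = "dedges (At - {R0}) u v"
  let ?Eo = "dedges (At - {R1}) u v"
  have uR1: "u R1 \<notin> ?Nz" using conn_end[OF c0] by blast
  have key: "w \<notin> ?Nz" if w: "conn At u v ?No (v R1) w" for w
  proof
    assume wN: "w \<in> ?Nz"
    have wN1: "w \<notin> ?No" using conn_end[OF w] by blast
    have "(u R0, w) \<in> (?Ez)\<^sup>*" using wN unfolding reachR_iff .
    then have "conn At u v ?No (u R0) w"
    proof (rule conn_of_F)
      show "?Ez \<subseteq> dedges At u v" by (rule dedges_mono) auto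
      show "\<forall>z. (u R0, z) \<in> (?Ez)\<^sup>* \<longrightarrow> (z, w) \<in> (?Ez)\<^sup>* \<longrightarrow> z \<notin> ?No"
      proof (intro allI impI notI)
        fix z assume z: "(u R0, z) \<in> (?Ez)\<^sup>*" "(z, w) \<in> (?Ez)\<^sup>*" "z \<in> ?No"
        from L2[OF z(2) dedges_rm2[of At R0 u v R1]]
        show False
        proof
          assume "(z, w) \<in> (?Eo)\<^sup>*"
          then have "(u R1, w) \<in> (?Eo)\<^sup>*" using rtrancl_trans[of "u R1" z ?Eo w] z(3) unfolding reachR_iff by simp
          then have "w \<in> ?No" unfolding reachR_iff .
          then show False using wN1 by simp
        next
          assume "(z, u R1) \<in> (?Ez)\<^sup>*"
          then have "(u R0, u R1) \<in> (?Ez)\<^sup>*" using rtrancl_trans[of "u R0" z ?Ez "u R1"] z(1) by simp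
          then have "u R1 \<in> ?Nz" unfolding reachR_iff .
          then show False using uR1 by simp
        qed
      qed
    qed
    then have "conn At u v ?No (v R1) (u R0)" by (rule conn_trans[OF w conn_sym])
    then have "R0 \<in> coupled At u v Inc R1" by (rule in_coupled[OF I(1)])
    moreover have "R1 \<in> coupled At u v Inc R0" using in_coupled[OF I(2) c0] .
    ultimately have "\<exists>R\<in>Inc. \<exists>S\<in>Inc. R \<in> coupled At u v Inc S \<and> S \<in> coupled At u v Inc R \<and> \<not> sim At u v R S"
      using ns I by blast
    then show False using sp unfolding splittable_def by simp
  qed
  have v1: "v R1 \<notin> ?No" and r: "(v R1, y) \<in> (adj At u v ?No)\<^sup>*" using c1 unfolding conn_def by auto
  have "\<forall>z. (v R1, z) \<in> (adj At u v ?No)\<^sup>* \<longrightarrow> z \<notin> ?Nz"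
  proof (intro allI impI)
    fix z assume "(v R1, z) \<in> (adj At u v ?No)\<^sup>*"
    then have "conn At u v ?No (v R1) z" using v1 unfolding conn_def by simp
    then show "z \<notin> ?Nz" by (rule key)
  qed
  then have "(v R1, y) \<in> (adj At u v ?Nz)\<^sup>*"
    by (rule restrict[OF r])
  moreover have "v R1 \<notin> ?Nz" using key[OF conn_refl[OF v1]] .
  ultimately show ?thesis unfolding conn_def by simp
qed


lemma classA:
  assumes C: "C \<in> Eqs At u v Inc" and X: "X \<in> coupledC At u v Inc C" "X \<noteq> C"
  shows "\<exists>R0\<in>C. \<exists>S\<in>X. conn At u v (reachR At u v R0) (v R0) (u S)"
proof -
  obtain R S P where RS: "R \<in> C" "S \<in> X" "upath At u v P (v R) (u S)" "set P \<inter> Cplus At u v C = {}"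
  proof -
    have "X \<in> {C' \<in> Eqs At u v Inc. \<exists>R\<in>C. \<exists>S\<in>C'. \<exists>P. upath At u v P (v R) (u S) \<and> set P \<inter> Cplus At u v C = {}}"
      using X unfolding coupledC_def by simp
    then show ?thesis using that by blast
  qed
  have "conn At u v (Cplus At u v C) (v R) (u S)" using upath_conn[OF RS(3,4)] .
  from lemmaA[OF C RS(1) this] obtain R0 where "R0 \<in> C" "conn At u v (reachR At u v R0) (v R0) (u S)" by blast
  then show ?thesis using RS(2) by blast
qed

lemma coupledC_Eqs: "X \<in> coupledC At u v Inc C \<Longrightarrow> X \<noteq> C \<Longrightarrow> X \<in> Eqs At u v Inc"
  unfolding coupledC_def by simp

lemma part1:
  assumes sp: "splittable At u v Inc" and C1: "C1 \<in> Eqs At u v Inc" and C2: "C2 \<in> Eqs At u v Inc"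
    and ne: "C1 \<noteq> C2" and a: "C1 \<in> coupledC At u v Inc C2" and b: "C2 \<in> coupledC At u v Inc C1"
  shows False
proof -
  obtain R0 S where A: "R0 \<in> C2" "S \<in> C1" "conn At u v (reachR At u v R0) (v R0) (u S)"
    using classA[OF C2 a ne] by blast
  obtain R1 T where B: "R1 \<in> C1" "T \<in> C2" "conn At u v (reachR At u v R1) (v R1) (u T)"
    using classA[OF C1 b ne[symmetric]] by blast
  have ne': "C2 \<noteq> C1" using ne by simp
  have c0: "conn At u v (reachR At u v R0) (v R0) (u R1)"
    using TC[OF A(3) class_sim[OF C1 A(2) B(1)] class_nsim[OF C2 C1 ne' A(1) A(2)]] .
  have c1: "conn At u v (reachR At u v R1) (v R1) (u R0)"
    using TC[OF B(3) class_sim[OF C2 B(2) A(1)] class_nsim[OF C1 C2 ne B(1) B(2)]] .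
  have I: "R0 \<in> Inc" "R1 \<in> Inc" using in_Eqs[OF C2 A(1)] in_Eqs[OF C1 B(1)] by simp_all
  have "R0 \<in> coupled At u v Inc R1" by (rule in_coupled[OF I(1) c1])
  moreover have "R1 \<in> coupled At u v Inc R0" by (rule in_coupled[OF I(2) c0])
  moreover have "\<not> sim At u v R0 R1" using class_nsim[OF C2 C1 ne' A(1) B(1)] .
  ultimately have "\<exists>R\<in>Inc. \<exists>S\<in>Inc. R \<in> coupled At u v Inc S \<and> S \<in> coupled At u v Inc R \<and> \<not> sim At u v R S"
    using I by blast
  then show False using sp unfolding splittable_def by simp
qed

lemma part2:
  assumes q: "query_graph At u v Inc" and sp: "splittable At u v Inc"
    and C1: "C1 \<in> Eqs At u v Inc" and C2: "C2 \<in> Eqs At u v Inc"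
    and ne: "C1 \<noteq> C2" and a: "C1 \<in> coupledC At u v Inc C2"
    and X: "X \<in> coupledC At u v Inc C1"
  shows "X \<in> coupledC At u v Inc C2"
proof (cases "X = C1")
  case True then show ?thesis using a by simp
next
  case False
  have XE: "X \<in> Eqs At u v Inc" using coupledC_Eqs[OF X False] .
  have XC2: "X \<noteq> C2" using part1[OF sp C1 C2 ne a] X by auto
  obtain R0 S where A: "R0 \<in> C2" "S \<in> C1" "conn At u v (reachR At u v R0) (v R0) (u S)"
    using classA[OF C2 a ne] by blast
  obtain R1 T where B: "R1 \<in> C1" "T \<in> X" "conn At u v (reachR At u v R1) (v R1) (u T)"
    using classA[OF C1 X False] by blast
  have ne': "C2 \<noteq> C1" using ne by simp
  have c0: "conn At u v (reachR At u v R0) (v R0) (u R1)"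
    using TC[OF A(3) class_sim[OF C1 A(2) B(1)] class_nsim[OF C2 C1 ne' A(1) A(2)]] .
  have I: "R0 \<in> Inc" "R1 \<in> Inc" using in_Eqs[OF C2 A(1)] in_Eqs[OF C1 B(1)] by simp_all
  have c2: "conn At u v (reachR At u v R0) (v R1) (u T)"
    using P2core[OF sp I class_nsim[OF C2 C1 ne' A(1) B(1)] c0 B(3)] .
  have R1A: "R1 \<in> At" using q I(2) unfolding query_graph_def by blast
  have "conn At u v (reachR At u v R0) (u R1) (v R1)"
    using conn_edge[of R1 At u "reachR At u v R0" v, OF R1A conjunct2[OF conn_end[OF c0]] conjunct1[OF conn_end[OF c2]]] .
  then have "conn At u v (reachR At u v R0) (v R0) (u T)"
    using conn_trans[OF conn_trans[OF c0] c2] by simp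
  moreover have "Cplus At u v C2 \<subseteq> reachR At u v R0" using A(1) unfolding Cplus_def by blast
  ultimately have "conn At u v (Cplus At u v C2) (v R0) (u T)" by (rule conn_mono[rotated])
  then obtain P where P: "upath At u v P (v R0) (u T)" "set P \<inter> Cplus At u v C2 = {}"
    using conn_upath by metis
  have "\<exists>R\<in>C2. \<exists>S\<in>X. \<exists>P. upath At u v P (v R) (u S) \<and> set P \<inter> Cplus At u v C2 = {}"
    using P A(1) B(2) by blast
  then show ?thesis unfolding coupledC_def using XE by simp
qed

theorem proposition5p6:
  fixes At Inc :: "'r set" and u v :: "'r \<Rightarrow> 'v" and C1 C2 :: "'r set"
  assumes "query_graph At u v Inc"
    and "splittable At u v Inc"
    and "C1 \<in> Eqs At u v Inc" and "C2 \<in> Eqs At u v Inc" and "C1 \<noteq> C2"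
  shows "(C1 \<notin> coupledC At u v Inc C2 \<or> C2 \<notin> coupledC At u v Inc C1) \<and>
         (C1 \<in> coupledC At u v Inc C2 \<longrightarrow> coupledC At u v Inc C1 \<subset> coupledC At u v Inc C2)"
proof (intro conjI impI)
  show "C1 \<notin> coupledC At u v Inc C2 \<or> C2 \<notin> coupledC At u v Inc C1"
    using part1[OF assms(2-5)] by blast
  assume a: "C1 \<in> coupledC At u v Inc C2"
  have sub: "coupledC At u v Inc C1 \<subseteq> coupledC At u v Inc C2"
    using part2[OF assms a] by blast
  have "C2 \<in> coupledC At u v Inc C2" unfolding coupledC_def by simp
  moreover have "C2 \<notin> coupledC At u v Inc C1" using part1[OF assms(2-5) a] by blast
  ultimately show "coupledC At u v Inc C1 \<subset> coupledC At u v Inc C2" using sub by blast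
qed

end
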